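(* Let $\omega\in S_n$. The poset $M_\omega$ contains a parallelogram-pattern poset if and only if $\omega$ contains the pattern $3412$ or the pattern $3421$.
   Context: Permutations $\omega\in S_n$ are written in one-line notation. Let ${\rm Inv}(\omega)=\{(i,j): 1\le i<j\le n,\ \omega(i)>\omega(j)\}$, $c_i(\omega)=\#\{j: i<j\le n,\ \omega(i)>\omega(j)\}$, and for $i<j$, $c_{i,j}(\omega)=\#\{k: i<k<j,\ \omega(i)>\omega(k)\}$; $[m]=\{1,\dots,m\}$. For $i$ with $c_i(\omega)>0$ and $x\in[c_i(\omega)]$, $m_{i,x}(\omega)\in\mathbb{N}^n$ has $j$-th coordinate $0$ if $j<i$; $x$ if $j=i$; $0$ if $j>i$ and $(i,j)\in{\rm Inv}(\omega)$; $\max\{0,x-c_{i,j}(\omega)\}$ if $j>i$ and $(i,j)\notin{\rm Inv}(\omega)$. $M_\omega$ is the set of all such $m_{i,x}(\omega)$, ordered by the product order on $\mathbb{N}^n$. For $1\le i<j\le n$, $b<a$ in $[c_i(\omega)]$ and $c<d$ in $[c_j(\omega)]$ with $a+c=b+d$, the set $\{m_{i,a}(\omega),m_{i,b}(\omega),m_{j,c}(\omega),m_{j,d}(\omega)\}$ is a parallelogram-pattern poset if $m_{i,a}(\omega)>m_{j,d}(\omega)$, $m_{i,b}(\omega)>m_{j,c}(\omega)$, and $m_{i,b}(\omega)$, $m_{j,d}(\omega)$ are incomparable. $\omega$ contains the pattern $3412$ (resp. $3421$) if there exist $i<j<k<l$ with $\omega(k)<\omega(l)<\omega(i)<\omega(j)$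 (resp. $\omega(l)<\omega(k)<\omega(i)<\omega(j)$). *)

theory Defs
  imports "HOL-Combinatorics.Permutations"
begin

text \<open>Permutations of [n] = {1..n} are functions w with w permutes {1..n}
  (one-line notation w(1),...,w(n)). Vectors in N^n are functions nat => nat,
  coordinates indexed 1..n, all other coordinates 0; the product order is then
  the pointwise order on functions.\<close>

definition Inv :: "(nat \<Rightarrow> nat) \<Rightarrow> nat \<Rightarrow> (nat \<times> nat) set" where
  "Inv w n = {(i, j). 1 \<le> i \<and> i < j \<and> j \<le> n \<and> w i > w j}"

definition cc :: "(nat \<Rightarrow> nat) \<Rightarrow> nat \<Rightarrow> nat \<Rightarrow> nat" where
  "cc w n i = card {j. i < j \<and> j \<le> n \<and> w i > w j}"

definition cij :: "(nat \<Rightarrow> nat) \<Rightarrow> nat \<Rightarrow> nat \<Rightarrow> nat" where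
  "cij w i j = card {k. i < k \<and> k < j \<and> w i > w k}"

definition mvec :: "(nat \<Rightarrow> nat) \<Rightarrow> nat \<Rightarrow> nat \<Rightarrow> nat \<Rightarrow> (nat \<Rightarrow> nat)" where
  "mvec w n i x = (\<lambda>j.
     if j < 1 \<or> j > n then 0
     else if j < i then 0
     else if j = i then x
     else if (i, j) \<in> Inv w n then 0
     else nat (max 0 (int x - int (cij w i j))))"


definition Mset :: "(nat \<Rightarrow> nat) \<Rightarrow> nat \<Rightarrow> (nat \<Rightarrow> nat) set" where
  "Mset w n = {mvec w n i x | i x. 1 \<le> i \<and> i \<le> n \<and> 0 < cc w n i \<and> 1 \<le> x \<and> x \<le> cc w n i}"

definition parallelogram_pattern :: "(nat \<Rightarrow> nat) \<Rightarrow> nat \<Rightarrow> (nat \<Rightarrow> nat) set \<Rightarrow> bool" where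
  "parallelogram_pattern w n P \<longleftrightarrow>
     (\<exists>i j a b c d. 1 \<le> i \<and> i < j \<and> j \<le> n \<and>
        1 \<le> b \<and> b < a \<and> a \<le> cc w n i \<and>
        1 \<le> c \<and> c < d \<and> d \<le> cc w n j \<and> a + c = b + d \<and>
        P = {mvec w n i a, mvec w n i b, mvec w n j c, mvec w n j d} \<and>
        mvec w n i a > mvec w n j d \<and> mvec w n i b > mvec w n j c \<and>
        \<not> mvec w n i b \<le> mvec w n j d \<and> \<not> mvec w n j d \<le> mvec w n i b)"

definition contains_parallelogram :: "(nat \<Rightarrow> nat) \<Rightarrow> nat \<Rightarrow> bool" where
  "contains_parallelogram w n \<longleftrightarrow> (\<exists>P \<subseteq> Mset w n. parallelogram_pattern w n P)"

definition contains_3412 :: "(nat \<Rightarrow> nat) \<Rightarrow> nat \<Rightarrow> bool" where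
  "contains_3412 w n \<longleftrightarrow> (\<exists>i j k l. 1 \<le> i \<and> i < j \<and> j < k \<and> k < l \<and> l \<le> n \<and>
      w k < w l \<and> w l < w i \<and> w i < w j)"

definition contains_3421 :: "(nat \<Rightarrow> nat) \<Rightarrow> nat \<Rightarrow> bool" where
  "contains_3421 w n \<longleftrightarrow> (\<exists>i j k l. 1 \<le> i \<and> i < j \<and> j < k \<and> k < l \<and> l \<le> n \<and>
      w l < w k \<and> w k < w i \<and> w i < w j)"

end

theory Submission
  imports Defs
begin

lemma cij_tri:
  assumes "i < j" "j < x" "w i < w j"
  shows "cij w i x \<le> cij w i j + cij w j x"
proof -
  have "{k. i < k \<and> k < x \<and> w i > w k} \<subseteq> {k. i < k \<and> k < j \<and> w i > w k} \<union> {k. j < k \<and> k < x \<and> w j > w k}"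
  proof
    fix k assume "k \<in> {k. i < k \<and> k < x \<and> w i > w k}"
    then have k: "i < k" "k < x" "w i > w k" by auto
    show "k \<in> {k. i < k \<and> k < j \<and> w i > w k} \<union> {k. j < k \<and> k < x \<and> w j > w k}"
    proof (cases "k < j")
      case True then show ?thesis using k by simp
    next
      case False
      then have "k \<noteq> j" using k assms by auto
      with False have "j < k" by simp
      then show ?thesis using k assms by simp
    qed
  qed
  then have "card {k. i < k \<and> k < x \<and> w i > w k} \<le> card ({k. i < k \<and> k < j \<and> w i > w k} \<union> {k. j < k \<and> k < x \<and> w j > w k})"
    by (intro card_mono) auto
  also have "\<dots> \<le> card {k. i < k \<and> k < j \<and> w i > w k} + card {k. j < k \<and> k < x \<and> w j > w k}"
    by (rule card_Un_le)
  finally show ?thesis unfolding cij_def .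
qed

lemma key:
  assumes inj: "inj w" and ij: "1 \<le> i" "i < j" "j \<le> n" and d: "1 \<le> d"
  shows "mvec w n j d \<le> mvec w n i a \<longleftrightarrow> w i < w j \<and> d + cij w i j \<le> a"
proof
  assume le: "mvec w n j d \<le> mvec w n i a"
  have "mvec w n j d j \<le> mvec w n i a j" using le by (simp add: le_fun_def)
  moreover have "mvec w n j d j = d" using ij by (simp add: mvec_def)
  ultimately have h: "d \<le> mvec w n i a j" by simp
  have ninv: "(i, j) \<notin> Inv w n"
  proof
    assume "(i, j) \<in> Inv w n"
    then have "mvec w n i a j = 0" using ij by (simp add: mvec_def)
    with h d show False by simp
  qed
  then have "\<not> w i > w j" using ij by (simp add: Inv_def)
  moreover have "w i \<noteq> w j" using inj ij by (metis injD less_irrefl)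
  ultimately have "w i < w j" by simp
  moreover have "mvec w n i a j = nat (max 0 (int a - int (cij w i j)))"
    using ij ninv by (simp add: mvec_def)
  ultimately show "w i < w j \<and> d + cij w i j \<le> a" using h d by auto
next
  assume "w i < w j \<and> d + cij w i j \<le> a"
  then have wij: "w i < w j" and da: "d + cij w i j \<le> a" by auto
  show "mvec w n j d \<le> mvec w n i a"
    unfolding le_fun_def
  proof
    fix x
    show "mvec w n j d x \<le> mvec w n i a x"
    proof (cases "x < 1 \<or> x > n \<or> x < j")
      case True then show ?thesis by (auto simp: mvec_def)
    next
      case False
      then have x: "1 \<le> x" "x \<le> n" "j \<le> x" by auto
      show ?thesis
      proof (cases "x = j")
        case True
        have "(i, j) \<notin> Inv w n" using wij by (simp add: Inv_def)
        then show ?thesis using True ij da by (simp add: mvec_def)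
      next
        case False
        then have jx: "j < x" using x by simp
        show ?thesis
        proof (cases "(j, x) \<in> Inv w n")
          case True then show ?thesis using x jx by (simp add: mvec_def)
        next
          case ni: False
          then have "w x \<ge> w j" using x jx ij by (auto simp: Inv_def)
          then have "(i, x) \<notin> Inv w n" using wij by (auto simp: Inv_def)
          moreover have "cij w i x \<le> cij w i j + cij w j x" using cij_tri[OF ij(2) jx wij] .
          ultimately show ?thesis using ni x jx ij da by (auto simp: mvec_def)
        qed
      qed
    qed
  qed
qed

lemma mvec_at_i: "1 \<le> i \<Longrightarrow> i \<le> n \<Longrightarrow> mvec w n i x i = x"
  by (simp add: mvec_def)

lemma mvec_before: "k < j \<Longrightarrow> mvec w n j x k = 0"
  by (simp add: mvec_def)

lemma count_split:
  assumes "i < j" "j \<le> n"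
  shows "cc w n i = cij w i j + card {k. j \<le> k \<and> k \<le> n \<and> w i > w k}"
proof -
  have "{k. i < k \<and> k \<le> n \<and> w i > w k} = {k. i < k \<and> k < j \<and> w i > w k} \<union> {k. j \<le> k \<and> k \<le> n \<and> w i > w k}"
    using assms by auto
  moreover have "card ({k. i < k \<and> k < j \<and> w i > w k} \<union> {k. j \<le> k \<and> k \<le> n \<and> w i > w k})
     = card {k. i < k \<and> k < j \<and> w i > w k} + card {k. j \<le> k \<and> k \<le> n \<and> w i > w k}"
    by (rule card_Un_disjoint) auto
  ultimately show ?thesis unfolding cc_def cij_def by simp
qed

lemma two_elems:
  assumes "finite A" "card A \<ge> 2"
  shows "\<exists>k l. k \<in> A \<and> l \<in> A \<and> k < (l::nat)"
proof -
  obtain B where "B \<subseteq> A" "card B = 2" using assms by (meson obtain_subset_with_card_n)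
  then obtain x y where "x \<noteq> y" "x \<in> A" "y \<in> A" by (auto simp: card_2_iff)
  then show ?thesis by (metis linorder_neqE_nat)
qed

lemma Mset_memI: "1 \<le> i \<Longrightarrow> i \<le> n \<Longrightarrow> 0 < cc w n i \<Longrightarrow> 1 \<le> x \<Longrightarrow> x \<le> cc w n i \<Longrightarrow> mvec w n i x \<in> Mset w n"
  unfolding Mset_def by blast

theorem mainTheorem8:
  fixes w :: "nat \<Rightarrow> nat" and n :: nat
  assumes "w permutes {1..n}"
  shows "contains_parallelogram w n \<longleftrightarrow> contains_3412 w n \<or> contains_3421 w n"
proof
  have inj: "inj w" using assms by (rule permutes_inj)
  assume "contains_parallelogram w n"
  then obtain P where "parallelogram_pattern w n P" unfolding contains_parallelogram_def by blast
  then obtain i j a b c d where h0: "1 \<le> i \<and> i < j \<and> j \<le> n \<and> 1 \<le> b \<and> b < a \<and> a \<le> cc w n i \<and>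
      1 \<le> c \<and> c < d \<and> d \<le> cc w n j \<and> a + c = b + d \<and>
      P = {mvec w n i a, mvec w n i b, mvec w n j c, mvec w n j d} \<and>
      mvec w n i a > mvec w n j d \<and> mvec w n i b > mvec w n j c \<and>
      \<not> mvec w n i b \<le> mvec w n j d \<and> \<not> mvec w n j d \<le> mvec w n i b"
    unfolding parallelogram_pattern_def by (elim exE) (rule that)
  have h: "1 \<le> i" "i < j" "j \<le> n" "1 \<le> b" "b < a" "a \<le> cc w n i"
      "1 \<le> c" "c < d" "d \<le> cc w n j"
      "mvec w n i a > mvec w n j d" "mvec w n i b > mvec w n j c"
      "\<not> mvec w n j d \<le> mvec w n i b" using h0 by blast+
  have d1: "1 \<le> d" using h(7,8) by linarith
  have "mvec w n j d \<le> mvec w n i a" using h(10) by (rule less_imp_le)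
  then have A0: "w i < w j \<and> d + cij w i j \<le> a" using key[OF inj h(1,2,3) d1, of a] by blast
  then have A: "w i < w j" "d + cij w i j \<le> a" by blast+
  have "mvec w n j c \<le> mvec w n i b" using h(11) by (rule less_imp_le)
  then have B0: "w i < w j \<and> c + cij w i j \<le> b" using key[OF inj h(1,2,3) h(7), of b] by blast
  then have B: "c + cij w i j \<le> b" by blast
  have "cc w n i \<ge> cij w i j + 2" using A B h by linarith
  then have "card {k. j \<le> k \<and> k \<le> n \<and> w i > w k} \<ge> 2"
    using count_split[OF h(2,3), of w] by linarith
  then obtain k l where kl: "k \<in> {k. j \<le> k \<and> k \<le> n \<and> w i > w k}" "l \<in> {k. j \<le> k \<and> k \<le> n \<and> w i > w k}" "k < l"
    using two_elems[of "{k. j \<le> k \<and> k \<le> n \<and> w i > w k}"] by auto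
  have "k \<noteq> j" "l \<noteq> j" using kl A by auto
  then have kl2: "j < k" "k < l" "l \<le> n" "w k < w i" "w l < w i" using kl by auto
  have "w k \<noteq> w l" using inj kl2 by (metis injD less_irrefl)
  show "contains_3412 w n \<or> contains_3421 w n"
  proof (cases "w k < w l")
    case True
    have "contains_3412 w n" unfolding contains_3412_def
      apply (rule exI[of _ i], rule exI[of _ j], rule exI[of _ k], rule exI[of _ l])
      using kl2 A h(1,2) True by simp
    then show ?thesis ..
  next
    case False
    have lk: "w l < w k" using \<open>w k \<noteq> w l\<close> False by simp
    have "contains_3421 w n" unfolding contains_3421_def
      apply (rule exI[of _ i], rule exI[of _ j], rule exI[of _ k], rule exI[of _ l])
      using kl2 A h(1,2) lk by simp
    then show ?thesis ..
  qed
next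
  have inj: "inj w" using assms by (rule permutes_inj)
  assume "contains_3412 w n \<or> contains_3421 w n"
  then obtain i j k l where p: "1 \<le> i" "i < j" "j < k" "k < l" "l \<le> n" "w k < w i" "w l < w i" "w i < w j"
  proof
    assume "contains_3412 w n"
    then obtain i j k l where q: "1 \<le> i \<and> i < j \<and> j < k \<and> k < l \<and> l \<le> n \<and>
      w k < w l \<and> w l < w i \<and> w i < w j" unfolding contains_3412_def by (elim exE) (rule that)
    show thesis apply (rule that[of i j k l]) using q by auto
  next
    assume "contains_3421 w n"
    then obtain i j k l where q: "1 \<le> i \<and> i < j \<and> j < k \<and> k < l \<and> l \<le> n \<and>
      w l < w k \<and> w k < w i \<and> w i < w j" unfolding contains_3421_def by (elim exE) (rule that)
    show thesis apply (rule that[of i j k l]) using q by auto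
  qed
  define e where "e = cij w i j"
  have jn: "j \<le> n" using p by simp
  have "{k, l} \<subseteq> {k. j \<le> k \<and> k \<le> n \<and> w i > w k}" using p by auto
  then have "card {k, l} \<le> card {k. j \<le> k \<and> k \<le> n \<and> w i > w k}" by (intro card_mono) auto
  then have ci: "cc w n i \<ge> e + 2" using count_split[OF p(2) jn, of w] p unfolding e_def by simp
  have "{k, l} \<subseteq> {k. j < k \<and> k \<le> n \<and> w j > w k}" using p by auto
  then have "card {k, l} \<le> card {k. j < k \<and> k \<le> n \<and> w j > w k}" by (intro card_mono) auto
  then have cj: "cc w n j \<ge> 2" using p unfolding cc_def by simp
  have i_n: "i \<le> n" using p by simp
  have j1: "1 \<le> j" using p by simp
  have ne: "\<And>x y. x \<ge> 1 \<Longrightarrow> mvec w n j y \<noteq> mvec w n i x"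
  proof
    fix x y assume "x \<ge> (1::nat)" "mvec w n j y = mvec w n i x"
    then have "mvec w n j y i = mvec w n i x i" by simp
    then show False using \<open>x \<ge> 1\<close> mvec_at_i[OF p(1) i_n] mvec_before[OF p(2)] by simp
  qed
  have l1: "mvec w n j 2 \<le> mvec w n i (e+2)" using key[OF inj p(1,2) jn, of 2 "e+2"] p e_def by simp
  have l2: "mvec w n j 1 \<le> mvec w n i (e+1)" using key[OF inj p(1,2) jn, of 1 "e+1"] p e_def by simp
  have l3: "\<not> mvec w n j 2 \<le> mvec w n i (e+1)" using key[OF inj p(1,2) jn, of 2 "e+1"] e_def by simp
  have l4: "\<not> mvec w n i (e+1) \<le> mvec w n j 2"
  proof
    assume "mvec w n i (e+1) \<le> mvec w n j 2"
    then have "mvec w n i (e+1) i \<le> mvec w n j 2 i" by (simp add: le_fun_def)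
    then show False using mvec_at_i[OF p(1) i_n] mvec_before[OF p(2)] by simp
  qed
  have s1: "mvec w n j 2 < mvec w n i (e+2)" using l1 ne[of "e+2" 2] by (simp add: less_le)
  have s2: "mvec w n j 1 < mvec w n i (e+1)" using l2 ne[of "e+1" 1] by (simp add: less_le)
  have pp: "parallelogram_pattern w n {mvec w n i (e+2), mvec w n i (e+1), mvec w n j 1, mvec w n j 2}"
    unfolding parallelogram_pattern_def
    apply (rule exI[of _ i], rule exI[of _ j], rule exI[of _ "e+2"], rule exI[of _ "e+1"],
           rule exI[of _ 1], rule exI[of _ 2])
    apply (intro conjI)
    using p jn ci cj s1 s2 l3 l4 by simp_all
  have sub: "{mvec w n i (e+2), mvec w n i (e+1), mvec w n j 1, mvec w n j 2} \<subseteq> Mset w n"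
    using p jn i_n j1 ci cj by (simp add: Mset_memI)
  show "contains_parallelogram w n" unfolding contains_parallelogram_def using pp sub by blast
qed

end
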